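(* Let $X$ be a finite quandle with connected components $C_1,\dots,C_k$, let $s=(x_1,\dots,x_n)\in X^n$, let $D_j=\{1\le i\le n:x_i\in C_j\}$ and $n_j=|D_j|$, and suppose $n_j>\max_{1\le r\le k}|C_r|$ for every $1\le j\le k$. Then the image in $S_{n_1}\times\dots\times S_{n_k}$ of the stabilizer of $s$ in $B_{n_1,\dots,n_k}$ surjects onto $(\mathbb Z/2\mathbb Z)^k$ under the sign homomorphisms.
   Context: A quandle is a set $X$ with an operation $x^y$ such that $x\mapsto x^y$ is bijective for each $y$, $(z^x)^y=(z^y)^{x^y}$ and $x^x=x$; its connected components are the classes of the smallest equivalence relation with $x\sim x^y$. $B_n$ acts on $X^n$ from the right by $(\dots,x_i,x_{i+1},\dots)^{\sigma_i}=(\dots,x_{i+1},x_i^{x_{i+1}},\dots)$, and $B_n\to S_n$ sends $\sigma_i\mapsto(i\ i+1)$. $S_{n_1}\times\dots\times S_{n_k}$ is identified with $\{\sigma\in S_n:\sigma(D_j)=D_j\ \forall j\}$, and $B_{n_1,\dots,n_k}$ is its preimage in $B_n$. The sign homomorphisms are the signs of the restrictions to each $D_j$. *)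

theory Defs
  imports "HOL-Combinatorics.Combinatorics"
begin

(* A quandle on the carrier X with operation op, op x y = x^y *)
definition quandle :: "'a set \<Rightarrow> ('a \<Rightarrow> 'a \<Rightarrow> 'a) \<Rightarrow> bool" where
  "quandle X op \<longleftrightarrow>
     (\<forall>x\<in>X. \<forall>y\<in>X. op x y \<in> X) \<and>
     (\<forall>y\<in>X. bij_betw (\<lambda>x. op x y) X X) \<and>
     (\<forall>x\<in>X. \<forall>y\<in>X. \<forall>z\<in>X. op (op z x) y = op (op z y) (op x y)) \<and>
     (\<forall>x\<in>X. op x x = x)"

definition qrel :: "'a set \<Rightarrow> ('a \<Rightarrow> 'a \<Rightarrow> 'a) \<Rightarrow> ('a \<times> 'a) set" where
  "qrel X op = (let R = {(x, op x y) | x y. x \<in> X \<and> y \<in> X} in (R \<union> R\<inverse>)\<^sup>* \<inter> (X \<times> X))"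

definition components :: "'a set \<Rightarrow> ('a \<Rightarrow> 'a \<Rightarrow> 'a) \<Rightarrow> 'a set set" where
  "components X op = X // qrel X op"

definition rinv :: "'a set \<Rightarrow> ('a \<Rightarrow> 'a \<Rightarrow> 'a) \<Rightarrow> 'a \<Rightarrow> 'a \<Rightarrow> 'a" where
  "rinv X op y a = (THE z. z \<in> X \<and> op z a = y)"

(* Braid words: (i, True) = sigma_(i+1), (i, False) = its inverse (0-indexed positions i, i+1) *)
type_synonym bword = "(nat \<times> bool) list"

definition valid_word :: "nat \<Rightarrow> bword \<Rightarrow> bool" where
  "valid_word n w \<longleftrightarrow> (\<forall>g\<in>set w. Suc (fst g) < n)"

fun act_gen :: "'a set \<Rightarrow> ('a \<Rightarrow> 'a \<Rightarrow> 'a) \<Rightarrow> 'a list \<Rightarrow> nat \<times> bool \<Rightarrow> 'a list" where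
  "act_gen X op xs (i, True) = xs[i := xs ! Suc i, Suc i := op (xs ! i) (xs ! Suc i)]"
| "act_gen X op xs (i, False) = xs[i := rinv X op (xs ! Suc i) (xs ! i), Suc i := xs ! i]"

definition act :: "'a set \<Rightarrow> ('a \<Rightarrow> 'a \<Rightarrow> 'a) \<Rightarrow> 'a list \<Rightarrow> bword \<Rightarrow> 'a list" where
  "act X op xs w = foldl (act_gen X op) xs w"

fun braid_perm :: "bword \<Rightarrow> nat \<Rightarrow> nat" where
  "braid_perm [] = id"
| "braid_perm (g # w) = transpose (fst g) (Suc (fst g)) \<circ> braid_perm w"

definition Dset :: "'a list \<Rightarrow> 'a set \<Rightarrow> nat set" where
  "Dset s C = {i. i < length s \<and> s ! i \<in> C}"

end

theory Submission
  imports Defs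
begin

definition invw :: "bword \<Rightarrow> bword" where
  "invw w = rev (map (\<lambda>(i, b). (i, \<not> b)) w)"

lemma act_append: "act X op xs (u @ v) = act X op (act X op xs u) v"
  by (simp add: act_def)

lemma act_Cons: "act X op xs (g # v) = act X op (act_gen X op xs g) v"
  by (simp add: act_def)

lemma act_Nil: "act X op xs [] = xs"
  by (simp add: act_def)

lemma braid_perm_append: "braid_perm (u @ v) = braid_perm u \<circ> braid_perm v"
  by (induction u) auto

lemma bij_braid_perm: "bij (braid_perm w)"
proof (induction w)
  case Nil
  then show ?case by (simp only: braid_perm.simps bij_id)
next
  case (Cons g w)
  have "bij (transpose (fst g) (Suc (fst g)) \<circ> braid_perm w)"
    by (rule bij_comp[OF Cons.IH]) simp
  then show ?case by (simp only: braid_perm.simps)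
qed

lemma transpose_cancel: "transpose a b \<circ> (transpose a b \<circ> f) = f"
  by (simp add: fun_eq_iff)

lemma braid_perm_inv1: "braid_perm w \<circ> braid_perm (invw w) = id"
proof (induction w)
  case Nil
  then show ?case by (simp add: invw_def)
next
  case (Cons g w)
  obtain i b where g: "g = (i, b)" by (cases g)
  have "braid_perm (g # w) \<circ> braid_perm (invw (g # w)) =
        transpose i (Suc i) \<circ> (braid_perm w \<circ> braid_perm (invw w)) \<circ> transpose i (Suc i)"
    by (simp add: invw_def g braid_perm_append comp_assoc)
  also have "\<dots> = id" unfolding Cons.IH by simp
  finally show ?case .
qed

lemma braid_perm_inv2: "braid_perm (invw w) \<circ> braid_perm w = id"
proof (induction w)
  case Nil
  then show ?case by (simp add: invw_def)
next
  case (Cons g w)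
  obtain i b where g: "g = (i, b)" by (cases g)
  have "braid_perm (invw (g # w)) \<circ> braid_perm (g # w) =
        braid_perm (invw w) \<circ> braid_perm w"
    by (simp add: invw_def g braid_perm_append comp_assoc transpose_cancel)
  also have "\<dots> = id" using Cons.IH .
  finally show ?case .
qed

lemma conj_transpose:
  assumes "p \<circ> q = id" "q \<circ> p = id"
  shows "p \<circ> transpose a b \<circ> q = transpose (p a) (p b)"
proof (rule ext)
  fix x
  have px: "p (q x) = x" using assms(1) by (metis comp_apply id_apply)
  have inj: "\<And>u v. p u = p v \<Longrightarrow> u = v" using assms(2) by (metis comp_apply id_apply)
  have e1: "q x = a \<longleftrightarrow> x = p a" using px inj by metis
  have e2: "q x = b \<longleftrightarrow> x = p b" using px inj by metis
  show "(p \<circ> transpose a b \<circ> q) x = transpose (p a) (p b) x"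
    using e1 e2 px by (auto simp: transpose_def)
qed

lemma quandle_closed: "quandle X op \<Longrightarrow> x \<in> X \<Longrightarrow> y \<in> X \<Longrightarrow> op x y \<in> X"
  by (simp add: quandle_def)

lemma quandle_idem: "quandle X op \<Longrightarrow> x \<in> X \<Longrightarrow> op x x = x"
  by (simp add: quandle_def)

lemma rinv_op:
  assumes "quandle X op" "x \<in> X" "y \<in> X"
  shows "rinv X op (op x y) y = x"
proof -
  have inj: "inj_on (\<lambda>x. op x y) X" using assms unfolding quandle_def bij_betw_def by blast
  show ?thesis unfolding rinv_def
    by (rule the_equality) (use assms inj in \<open>auto dest: inj_onD\<close>)
qed

lemma act_gen_True_set:
  assumes "quandle X op" "set xs \<subseteq> X" "Suc i < length xs"
  shows "set (act_gen X op xs (i, True)) \<subseteq> X"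
proof -
  have a: "xs ! i \<in> X" "xs ! Suc i \<in> X" using assms(2,3) nth_mem[of i xs] nth_mem[of "Suc i" xs] by auto
  have b: "op (xs ! i) (xs ! Suc i) \<in> X" by (rule quandle_closed[OF assms(1) a])
  show ?thesis unfolding act_gen.simps
    by (intro set_update_subsetI assms(2) a b)
qed

lemma act_gen_cancel:
  assumes "quandle X op" "set xs \<subseteq> X" "Suc i < length xs"
  shows "act_gen X op (act_gen X op xs (i, True)) (i, False) = xs"
proof -
  have a: "xs ! i \<in> X" "xs ! Suc i \<in> X" using assms(2,3) nth_mem[of i xs] nth_mem[of "Suc i" xs] by auto
  define t where "t = xs[i := xs ! Suc i, Suc i := op (xs ! i) (xs ! Suc i)]"
  have t1: "t ! i = xs ! Suc i" "t ! Suc i = op (xs ! i) (xs ! Suc i)"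
    using assms(3) by (simp_all add: t_def nth_list_update)
  have "act_gen X op (act_gen X op xs (i, True)) (i, False) = t[i := xs ! i, Suc i := xs ! Suc i]"
    by (simp add: t_def[symmetric] t1 rinv_op[OF assms(1) a])
  also have "\<dots> = xs[i := xs ! i, Suc i := xs ! Suc i]"
    unfolding t_def by (simp add: list_update_swap)
  also have "\<dots> = xs" by simp
  finally show ?thesis .
qed

lemma act_inv:
  assumes "quandle X op" "set xs \<subseteq> X" "valid_word (length xs) w" "\<forall>g\<in>set w. snd g"
  shows "act X op (act X op xs w) (invw w) = xs"
  using assms(2-4)
proof (induction w arbitrary: xs)
  case Nil
  then show ?case by (simp add: act_def invw_def)
next
  case (Cons g w)
  obtain i where g: "g = (i, True)" using Cons.prems(3) by (cases g) auto
  have si: "Suc i < length xs" using Cons.prems(2) g by (simp add: valid_word_def)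
  let ?ys = "act_gen X op xs (i, True)"
  have ys: "set ?ys \<subseteq> X" using act_gen_True_set[OF assms(1) Cons.prems(1) si] .
  have ly: "length ?ys = length xs" by simp
  have IH: "act X op (act X op ?ys w) (invw w) = ?ys"
    using Cons.IH[OF ys] Cons.prems(2,3) ly by (simp add: valid_word_def)
  have "invw (g # w) = invw w @ [(i, False)]" by (simp add: invw_def g)
  then have "act X op (act X op xs (g # w)) (invw (g # w)) =
        act_gen X op (act X op (act X op ?ys w) (invw w)) (i, False)"
    by (simp add: act_append act_Cons g act_def)
  also have "\<dots> = xs" using IH act_gen_cancel[OF assms(1) Cons.prems(1) si] by simp
  finally show ?case .
qed

definition mvw :: "nat \<Rightarrow> nat \<Rightarrow> bword" where
  "mvw j k = map (\<lambda>m. (m, True)) (rev [Suc j..<k])"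

lemma mvw_Suc: "Suc j \<le> k \<Longrightarrow> mvw j (Suc k) = (k, True) # mvw j k"
  by (simp add: mvw_def)

lemma mvw_base: "mvw j (Suc j) = []"
  by (simp add: mvw_def)

lemma mvw_act:
  assumes "j < k" "k < length ys"
  shows "length (act X op ys (mvw j k)) = length ys \<and>
         act X op ys (mvw j k) ! j = ys ! j \<and> act X op ys (mvw j k) ! Suc j = ys ! k"
  using assms
proof (induction k arbitrary: ys)
  case 0
  then show ?case by simp
next
  case (Suc k)
  show ?case
  proof (cases "k = j")
    case True
    then show ?thesis by (simp add: mvw_base act_Nil)
  next
    case False
    then have jk: "j < k" using Suc.prems by simp
    let ?zs = "act_gen X op ys (k, True)"
    have lz: "length ?zs = length ys" by simp
    have IH: "length (act X op ?zs (mvw j k)) = length ?zs \<and>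
         act X op ?zs (mvw j k) ! j = ?zs ! j \<and> act X op ?zs (mvw j k) ! Suc j = ?zs ! k"
      using Suc.IH[OF jk] Suc.prems lz by simp
    have "act X op ys (mvw j (Suc k)) = act X op ?zs (mvw j k)"
      using jk by (simp add: mvw_Suc act_Cons)
    moreover have "?zs ! j = ys ! j" "?zs ! k = ys ! Suc k"
      using jk Suc.prems by (auto simp: nth_list_update)
    ultimately show ?thesis using IH lz by simp
  qed
qed

lemma mvw_perm:
  assumes "j < k"
  shows "braid_perm (mvw j k) j = j \<and> braid_perm (mvw j k) (Suc j) = k"
  using assms
proof (induction k)
  case 0
  then show ?case by simp
next
  case (Suc k)
  show ?case
  proof (cases "k = j")
    case True
    then show ?thesis by (simp add: mvw_base)
  next
    case False
    then have jk: "j < k" using Suc.prems by simp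
    then show ?thesis using Suc.IH by (simp add: mvw_Suc transpose_def)
  qed
qed

lemma mvw_valid: "k < n \<Longrightarrow> valid_word n (mvw j k)"
  by (auto simp: mvw_def valid_word_def)

lemma mvw_snd: "\<forall>g\<in>set (mvw j k). snd g"
  by (auto simp: mvw_def)

lemma invw_valid: "valid_word n w \<Longrightarrow> valid_word n (invw w)"
  by (auto simp: invw_def valid_word_def)

lemma generator:
  assumes q: "quandle X op" and sX: "set s \<subseteq> X" and jk: "j < k" "k < length s"
    and eq: "s ! j = s ! k"
  shows "\<exists>w. valid_word (length s) w \<and> act X op s w = s \<and> braid_perm w = transpose j k"
proof -
  let ?b = "mvw j k"
  define w where "w = ?b @ [(j, True)] @ invw ?b"
  let ?t = "act X op s ?b"
  have mv: "length ?t = length s" "?t ! j = s ! j" "?t ! Suc j = s ! k"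
    using mvw_act[OF jk] by auto
  have sjX: "s ! j \<in> X" using sX jk by (auto dest: nth_mem)
  have fix1: "act_gen X op ?t (j, True) = ?t"
    using mv eq quandle_idem[OF q sjX] jk
    by (auto simp: list_eq_iff_nth_eq nth_list_update)
  have "act X op s w = act X op ?t (invw ?b)"
    unfolding w_def act_append append.simps act_Cons fix1 ..
  also have "\<dots> = s"
    by (rule act_inv[OF q sX mvw_valid[OF jk(2)] mvw_snd])
  finally have A: "act X op s w = s" .
  have V: "valid_word (length s) w"
    using mvw_valid[OF jk(2)] invw_valid[OF mvw_valid[OF jk(2)]] jk
    by (auto simp: w_def valid_word_def)
  have "braid_perm w = braid_perm ?b \<circ> transpose j (Suc j) \<circ> braid_perm (invw ?b)"
    by (simp add: w_def braid_perm_append comp_assoc)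
  also have "\<dots> = transpose (braid_perm ?b j) (braid_perm ?b (Suc j))"
    by (rule conj_transpose[OF braid_perm_inv1 braid_perm_inv2])
  also have "\<dots> = transpose j k" using mvw_perm[OF jk(1)] by simp
  finally show ?thesis using A V by blast
qed

lemma equiv_qrel: "equiv X (qrel X op)"
proof -
  define R where "R = {(x, op x y) | x y. x \<in> X \<and> y \<in> X}"
  have q: "qrel X op = (R \<union> R\<inverse>)\<^sup>* \<inter> (X \<times> X)" by (simp add: qrel_def R_def Let_def)
  have s: "sym ((R \<union> R\<inverse>)\<^sup>*)" by (rule sym_rtrancl[OF sym_Un_converse])
  show ?thesis unfolding q
  proof (rule equivI)
    show "refl_on X ((R \<union> R\<inverse>)\<^sup>* \<inter> X \<times> X)" by (auto simp: refl_on_def)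
    show "sym ((R \<union> R\<inverse>)\<^sup>* \<inter> X \<times> X)" using s by (auto simp: sym_def)
    show "trans ((R \<union> R\<inverse>)\<^sup>* \<inter> X \<times> X)" by (auto simp: trans_def intro: rtrancl_trans)
  qed auto
qed

lemma comp_subset: "C \<in> components X op \<Longrightarrow> C \<subseteq> X"
  unfolding components_def using in_quotient_imp_subset[OF equiv_qrel] by blast

lemma comp_disj: "C \<in> components X op \<Longrightarrow> C' \<in> components X op \<Longrightarrow> x \<in> C \<Longrightarrow> x \<in> C' \<Longrightarrow> C = C'"
  unfolding components_def using quotient_disj[OF equiv_qrel] by blast

lemma comp_finite: "finite X \<Longrightarrow> finite (components X op)"
  unfolding components_def by (rule finite_quotient) (auto simp: qrel_def Let_def)

lemma Dset_finite: "finite (Dset s C)"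
  by (rule finite_subset[of _ "{..<length s}"]) (auto simp: Dset_def)

lemma transpose_image: "(a \<in> A \<longleftrightarrow> b \<in> A) \<Longrightarrow> transpose a b ` A = A"
proof -
  assume h: "a \<in> A \<longleftrightarrow> b \<in> A"
  have mem: "transpose a b x \<in> A" if "x \<in> A" for x
  proof (cases "x = a")
    case True
    then show ?thesis using h that by simp
  next
    case False
    then show ?thesis using h that by (cases "x = b") simp_all
  qed
  have sub: "transpose a b ` A \<subseteq> A" using mem by blast
  moreover have "A \<subseteq> transpose a b ` A"
  proof
    fix x assume "x \<in> A"
    then have "transpose a b x \<in> A" by (rule mem)
    then show "x \<in> transpose a b ` A" by (metis image_eqI transpose_involutory)
  qed
  ultimately show ?thesis by blast
qed

lemma gen_comp:
  assumes q: "quandle X op" and fX: "finite X" and sX: "set s \<subseteq> X"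
    and big: "\<forall>C\<in>components X op. card (Dset s C) > Max (card ` components X op)"
    and C0: "C0 \<in> components X op"
  shows "\<exists>w. valid_word (length s) w \<and> act X op s w = s \<and>
           (\<forall>C\<in>components X op. braid_perm w ` Dset s C = Dset s C) \<and>
           (\<forall>C\<in>components X op. sign_on (Dset s C) (braid_perm w) = (if C = C0 then -1 else 1))"
proof -
  let ?D = "Dset s C0"
  have fc: "finite (components X op)" by (rule comp_finite[OF fX])
  have fC0: "finite C0" using comp_subset[OF C0] fX finite_subset by blast
  have "card C0 \<le> Max (card ` components X op)" using fc C0 by (intro Max_ge) auto
  then have lt: "card C0 < card ?D" using big C0 by fastforce
  have imsub: "(\<lambda>i. s ! i) ` ?D \<subseteq> C0" by (auto simp: Dset_def)
  have "\<not> inj_on (\<lambda>i. s ! i) ?D"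
  proof
    assume "inj_on (\<lambda>i. s ! i) ?D"
    then have "card ?D = card ((\<lambda>i. s ! i) ` ?D)" by (simp add: card_image)
    also have "\<dots> \<le> card C0" by (rule card_mono[OF fC0 imsub])
    finally show False using lt by simp
  qed
  then obtain a b where ab: "a \<in> ?D" "b \<in> ?D" "a \<noteq> b" "s ! a = s ! b"
    unfolding inj_on_def by blast
  obtain j k where jk: "j < k" "j \<in> ?D" "k \<in> ?D" "s ! j = s ! k"
  proof (cases "a < b")
    case True
    then show ?thesis using ab that by blast
  next
    case False
    then have "b < a" using ab by simp
    then show ?thesis using ab that[of b a] by simp
  qed
  have kl: "k < length s" and sj: "s ! j \<in> C0" using jk by (auto simp: Dset_def)
  obtain w where w: "valid_word (length s) w" "act X op s w = s" "braid_perm w = transpose j k"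
    using generator[OF q sX jk(1) kl jk(4)] by blast
  have iff: "j \<in> Dset s C \<longleftrightarrow> k \<in> Dset s C" for C
    using jk kl by (auto simp: Dset_def)
  have img: "\<forall>C\<in>components X op. braid_perm w ` Dset s C = Dset s C"
    using w(3) iff transpose_image by metis
  have sg: "sign_on (Dset s C) (braid_perm w) = (if C = C0 then -1 else 1)"
    if C: "C \<in> components X op" for C
  proof (cases "C = C0")
    case True
    then show ?thesis using w(3) jk sign_on_transpose[of j ?D k] by simp
  next
    case False
    then have "s ! j \<notin> C" using comp_disj[OF C C0] sj by blast
    then have nj: "j \<notin> Dset s C" "k \<notin> Dset s C" using jk by (auto simp: Dset_def)
    have "sign_on (Dset s C) (transpose j k) = sign_on (Dset s C) (\<lambda>x. x)"
      by (rule sign_on_cong) (use nj in \<open>auto simp: transpose_def\<close>)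
    then show ?thesis using False w(3) by simp
  qed
  show ?thesis using w img sg by blast
qed

theorem proposition4p35:
  fixes X :: "'a set" and op :: "'a \<Rightarrow> 'a \<Rightarrow> 'a" and s :: "'a list"
  assumes "quandle X op"
    and "finite X"
    and "set s \<subseteq> X"
    and "\<forall>C\<in>components X op. card (Dset s C) > Max (card ` components X op)"
  shows "\<forall>\<epsilon> :: 'a set \<Rightarrow> int. (\<forall>C\<in>components X op. \<epsilon> C \<in> {1, -1}) \<longrightarrow>
           (\<exists>w. valid_word (length s) w \<and> act X op s w = s \<and>
                (\<forall>C\<in>components X op. braid_perm w ` Dset s C = Dset s C) \<and>
                (\<forall>C\<in>components X op. sign_on (Dset s C) (braid_perm w) = \<epsilon> C))"
proof (intro allI impI)
  fix \<epsilon> :: "'a set \<Rightarrow> int"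
  assume eps: "\<forall>C\<in>components X op. \<epsilon> C \<in> {1, -1}"
  let ?K = "components X op"
  have fc: "finite ?K" by (rule comp_finite[OF assms(2)])
  have main: "S \<subseteq> ?K \<Longrightarrow> \<exists>w. valid_word (length s) w \<and> act X op s w = s \<and>
           (\<forall>C\<in>?K. braid_perm w ` Dset s C = Dset s C) \<and>
           (\<forall>C\<in>?K. sign_on (Dset s C) (braid_perm w) = (if C \<in> S then -1 else 1))" if fS: "finite S" for S
    using fS
  proof (induction S rule: finite_induct)
    case empty
    show ?case
      by (rule exI[of _ "[]"]) (simp add: valid_word_def act_Nil)
  next
    case (insert C0 S)
    obtain w1 where w1: "valid_word (length s) w1" "act X op s w1 = s"
       "\<forall>C\<in>?K. braid_perm w1 ` Dset s C = Dset s C"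
       "\<forall>C\<in>?K. sign_on (Dset s C) (braid_perm w1) = (if C \<in> S then -1 else 1)"
      using insert by blast
    have C0: "C0 \<in> ?K" using insert by blast
    obtain w0 where w0: "valid_word (length s) w0" "act X op s w0 = s"
       "\<forall>C\<in>?K. braid_perm w0 ` Dset s C = Dset s C"
       "\<forall>C\<in>?K. sign_on (Dset s C) (braid_perm w0) = (if C = C0 then -1 else 1)"
      using gen_comp[OF assms C0] by blast
    have V: "valid_word (length s) (w1 @ w0)" using w1(1) w0(1) by (auto simp: valid_word_def)
    have A: "act X op s (w1 @ w0) = s" by (simp add: act_append w1(2) w0(2))
    have I: "\<forall>C\<in>?K. braid_perm (w1 @ w0) ` Dset s C = Dset s C"
      using w1(3) w0(3) unfolding braid_perm_append image_comp[symmetric] by simp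
    have bb: "bij_betw (braid_perm w) (Dset s C) (Dset s C)"
      if "braid_perm w ` Dset s C = Dset s C" for w C
      using that bij_braid_perm[of w] unfolding bij_betw_def bij_def
      by (auto intro: inj_on_subset)
    have S: "sign_on (Dset s C) (braid_perm (w1 @ w0)) = (if C \<in> insert C0 S then -1 else 1)"
      if C: "C \<in> ?K" for C
    proof -
      have "sign_on (Dset s C) (braid_perm (w1 @ w0)) =
            sign_on (Dset s C) (braid_perm w1) * sign_on (Dset s C) (braid_perm w0)"
        unfolding braid_perm_append
        by (rule sign_on_compose[OF bb bb Dset_finite]) (use C w1(3) w0(3) in auto)
      then show ?thesis using C w1(4) w0(4) \<open>C0 \<notin> S\<close> by auto
    qed
    show ?case using V A I S by blast
  qed
  obtain w where w: "valid_word (length s) w" "act X op s w = s"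
       "\<forall>C\<in>?K. braid_perm w ` Dset s C = Dset s C"
       "\<forall>C\<in>?K. sign_on (Dset s C) (braid_perm w) = (if C \<in> {C\<in>?K. \<epsilon> C = -1} then -1 else 1)"
    using main[of "{C\<in>?K. \<epsilon> C = -1}"] fc by auto
  have "\<forall>C\<in>?K. sign_on (Dset s C) (braid_perm w) = \<epsilon> C"
    using w(4) eps by fastforce
  then show "\<exists>w. valid_word (length s) w \<and> act X op s w = s \<and>
                (\<forall>C\<in>components X op. braid_perm w ` Dset s C = Dset s C) \<and>
                (\<forall>C\<in>components X op. sign_on (Dset s C) (braid_perm w) = \<epsilon> C)"
    using w by blast
qed

end
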